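(* Let $p=p_n$ depend on $n$, and suppose that under the true measure $\mathbb{P}_0$ the observations $Y_1,\dots,Y_n\in\mathbb{R}^{p_n}$ are i.i.d., mean zero, with covariance $\Sigma_0=\Sigma_{0n}$ and precision matrix $\Omega_0=\Sigma_0^{-1}$, where there are constants $k_\sigma\in(0,1]$, $\sigma_0>0$ independent of $n$ with $k_\sigma\le\lambda_{\min}(\Sigma_0)\le\lambda_{\max}(\Sigma_0)\le1/k_\sigma$ and the sub-Gaussian norm of $\Sigma_0^{-1/2}Y_1$ at most $\sigma_0$. Consider a working Bayesian model $Y_i$ i.i.d. $N_p(0,\Sigma)$ with a prior on $\Sigma$, and suppose that for some sequence $\epsilon_n\to0$, $\Pi_n(\|\Sigma-\Sigma_0\|>\epsilon_n\mid Y_1,\dots,Y_n)\to0$ in $\mathbb{P}_0$-probability. Then the induced posterior on $\Omega=\Sigma^{-1}$ contracts around $\Omega_0$ at rate $\epsilon_n$, i.e. $\Pi_n(\|\Omega-\Omega_0\|>\epsilon_n\mid Y_1,\dots,Y_n)\to0$ in $\mathbb{P}_0$-probability.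
   Context: $\|\cdot\|$ is the spectral norm; the sub-Gaussian norm of a mean-zero random vector $X$ is $\sup_{\|u\|=1}\sup_{q\ge1}q^{-1/2}(E|u^TX|^q)^{1/q}$. $\Pi_n(\cdot\mid Y_1,\dots,Y_n)$ denotes the posterior distribution. *)

theory Defs
  imports "HOL-Probability.Probability"
    "Jordan_Normal_Form.Determinant"
    "Jordan_Normal_Form.Char_Poly"
    "Jordan_Normal_Form.Gauss_Jordan_Elimination"
begin

text \<open>Observations in R^p are represented as extensional functions in
  PiE {..<p} UNIV (the space of the product measure); covariance parameters
  Sigma (p x p matrices) as extensional functions on {..<p} x {..<p}.\<close>

definition obs_space :: "nat \<Rightarrow> (nat \<Rightarrow> real) measure" where
  "obs_space p = Pi\<^sub>M {..<p} (\<lambda>_. borel)"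

definition param_space :: "nat \<Rightarrow> (nat \<times> nat \<Rightarrow> real) measure" where
  "param_space p = Pi\<^sub>M ({..<p} \<times> {..<p}) (\<lambda>_. borel)"

definition to_vec :: "nat \<Rightarrow> (nat \<Rightarrow> real) \<Rightarrow> real Matrix.vec" where
  "to_vec p y = Matrix.vec p y"

definition to_mat :: "nat \<Rightarrow> (nat \<times> nat \<Rightarrow> real) \<Rightarrow> real Matrix.mat" where
  "to_mat p S = Matrix.mat p p S"

definition vnorm :: "real Matrix.vec \<Rightarrow> real" where
  "vnorm v = sqrt (\<Sum>i<dim_vec v. (v $ i)^2)"

definition spec_norm :: "real Matrix.mat \<Rightarrow> real" where
  "spec_norm A = Sup {vnorm (A *\<^sub>v x) | x. x \<in> carrier_vec (dim_col A) \<and> vnorm x \<le> 1}"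

definition mat_inv :: "real Matrix.mat \<Rightarrow> real Matrix.mat" where
  "mat_inv A = the (mat_inverse A)"

definition pos_def_mat :: "real Matrix.mat \<Rightarrow> bool" where
  "pos_def_mat A \<longleftrightarrow> A \<in> carrier_mat (dim_row A) (dim_row A) \<and> transpose_mat A = A \<and>
     (\<forall>x \<in> carrier_vec (dim_row A). x \<noteq> 0\<^sub>v (dim_row A) \<longrightarrow> scalar_prod x (A *\<^sub>v x) > 0)"

definition inv_sqrt_mat :: "real Matrix.mat \<Rightarrow> real Matrix.mat" where
  "inv_sqrt_mat A = (SOME R. R \<in> carrier_mat (dim_row A) (dim_row A) \<and> pos_def_mat R \<and>
     R * R = mat_inv A)"

text \<open>Sub-Gaussian norm of a (mean-zero) random vector X in R^p is at most s:
  sup_{|u|=1} sup_{q>=1} q^{-1/2} (E|u^T X|^q)^{1/q} <= s, written out pointwise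
  as E|u^T X|^q <= (s * sqrt q)^q.\<close>
definition subgauss_norm_le :: "nat \<Rightarrow> 'a measure \<Rightarrow> ('a \<Rightarrow> real Matrix.vec) \<Rightarrow> real \<Rightarrow> bool" where
  "subgauss_norm_le p M X s \<longleftrightarrow>
     (\<forall>u \<in> carrier_vec p. vnorm u = 1 \<longrightarrow> (\<forall>q::real. q \<ge> 1 \<longrightarrow>
        (\<integral>\<^sup>+\<omega>. ennreal (\<bar>scalar_prod u (X \<omega>)\<bar> powr q) \<partial>M) \<le> ennreal ((s * sqrt q) powr q)))"

definition gauss_dens :: "nat \<Rightarrow> real Matrix.mat \<Rightarrow> real Matrix.vec \<Rightarrow> real" where
  "gauss_dens p S y = (2 * pi) powr (- real p / 2) * (Determinant.det S) powr (-1/2) *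
     exp (- (1/2) * scalar_prod y (mat_inv S *\<^sub>v y))"

definition likelihood :: "nat \<Rightarrow> nat \<Rightarrow> (nat \<Rightarrow> nat \<Rightarrow> real) \<Rightarrow> (nat \<times> nat \<Rightarrow> real) \<Rightarrow> real" where
  "likelihood p n ys S = (\<Prod>i<n. gauss_dens p (to_mat p S) (to_vec p (ys i)))"

definition posterior :: "nat \<Rightarrow> nat \<Rightarrow> (nat \<times> nat \<Rightarrow> real) measure \<Rightarrow> (nat \<Rightarrow> nat \<Rightarrow> real)
    \<Rightarrow> (nat \<times> nat \<Rightarrow> real) set \<Rightarrow> real" where
  "posterior p n mu ys A = enn2real
     ((\<integral>\<^sup>+S\<in>A. ennreal (likelihood p n ys S) \<partial>mu) / (\<integral>\<^sup>+S. ennreal (likelihood p n ys S) \<partial>mu))"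

definition to_zero_in_prob :: "(nat \<Rightarrow> 'a measure) \<Rightarrow> (nat \<Rightarrow> 'a \<Rightarrow> real) \<Rightarrow> bool" where
  "to_zero_in_prob M Z \<longleftrightarrow>
     (\<forall>\<delta>>0. (\<lambda>n. measure (M n) {\<omega> \<in> space (M n). \<bar>Z n \<omega>\<bar> > \<delta>}) \<longlonglongrightarrow> 0)"

end

theory Submission
  imports Defs
begin
unbundle no vec_syntax


lemma vnorm_L2: "vnorm v = L2_set (\<lambda>i. v $ i) {..<dim_vec v}"
  unfolding vnorm_def L2_set_def by simp

lemma vnorm_nonneg: "0 \<le> vnorm v" unfolding vnorm_def by (simp add: sum_nonneg)

lemma vnorm_sq: "(vnorm v)^2 = v \<bullet> v"
  unfolding vnorm_def scalar_prod_def by (simp add: sum_nonneg power2_eq_square atLeast0LessThan)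

lemma cs_abs: assumes "x \<in> carrier_vec n" "y \<in> carrier_vec n"
  shows "\<bar>x \<bullet> y\<bar> \<le> vnorm x * vnorm y"
proof -
  have "\<bar>x \<bullet> y\<bar> \<le> (\<Sum>i<n. \<bar>x$i\<bar> * \<bar>y$i\<bar>)"
    using assms unfolding scalar_prod_def by (auto simp: atLeast0LessThan abs_mult intro: order_trans[OF sum_abs])
  also have "\<dots> \<le> vnorm x * vnorm y" using L2_set_mult_ineq[of "\<lambda>i. x$i" "\<lambda>i. y$i" "{..<n}"] assms by (simp add: vnorm_L2)
  finally show ?thesis .
qed

lemma vnorm_add: assumes "x \<in> carrier_vec n" "y \<in> carrier_vec n" shows "vnorm (x + y) \<le> vnorm x + vnorm y"
proof -
  have "vnorm (x+y) = L2_set (\<lambda>i. x$i + y$i) {..<n}" using assms by (auto simp: vnorm_L2 intro!: L2_set_cong)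
  then show ?thesis using L2_set_triangle_ineq[of "\<lambda>i. x$i" "\<lambda>i. y$i" "{..<n}"] assms by (simp add: vnorm_L2)
qed

lemma vnorm_minus: assumes "x \<in> carrier_vec n" "y \<in> carrier_vec n" shows "vnorm x - vnorm y \<le> vnorm (x - y)"
proof -
  have "vnorm x = L2_set (\<lambda>i. (x - y)$i + y$i) {..<n}" using assms by (auto simp: vnorm_L2 intro!: L2_set_cong)
  then show ?thesis using L2_set_triangle_ineq[of "\<lambda>i. (x-y)$i" "\<lambda>i. y$i" "{..<n}"] assms by (simp add: vnorm_L2)
qed

lemma vnorm_smult: "vnorm (c \<cdot>\<^sub>v x) = \<bar>c\<bar> * vnorm x"
proof -
  have "\<bar>c\<bar> * vnorm x = L2_set (\<lambda>i. \<bar>c\<bar> * x$i) {..<dim_vec x}"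
    by (simp add: vnorm_L2 L2_set_right_distrib)
  also have "\<dots> = vnorm (c \<cdot>\<^sub>v x)" unfolding vnorm_L2 L2_set_def
    by (auto intro!: arg_cong[where f=sqrt] sum.cong simp: power_mult_distrib)
  finally show ?thesis by simp
qed

lemma vnorm_zero: assumes "x \<in> carrier_vec n" "vnorm x = 0" shows "x = 0\<^sub>v n"
proof -
  have "\<forall>i\<in>{..<n}. x $ i = 0" using assms L2_set_eq_0_iff[of "{..<n}" "\<lambda>i. x$i"] by (simp add: vnorm_L2)
  then show ?thesis using assms by (intro eq_vecI) auto
qed

lemma vnorm_0[simp]: "vnorm (0\<^sub>v n) = 0" unfolding vnorm_def by simp

lemma mat_bound: assumes A: "A \<in> carrier_mat n m"
  shows "\<exists>F\<ge>0. \<forall>x\<in>carrier_vec m. vnorm (A *\<^sub>v x) \<le> F * vnorm x"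
proof (intro exI conjI ballI)
  define L where "L i = vnorm (row A i)" for i
  let ?F = "L2_set L {..<n}"
  show "0 \<le> ?F" by (rule L2_set_nonneg)
  fix x :: "real vec" assume x: "x \<in> carrier_vec m"
  have "vnorm (A *\<^sub>v x) = L2_set (\<lambda>i. row A i \<bullet> x) {..<n}"
    using A x by (auto simp: vnorm_L2 intro!: L2_set_cong)
  also have "\<dots> = L2_set (\<lambda>i. \<bar>row A i \<bullet> x\<bar>) {..<n}" unfolding L2_set_def by simp
  also have "\<dots> \<le> L2_set (\<lambda>i. L i * vnorm x) {..<n}"
  proof (rule L2_set_mono)
    fix i assume i: "i \<in> {..<n}"
    have r: "row A i \<in> carrier_vec m" using A by auto
    show "\<bar>row A i \<bullet> x\<bar> \<le> L i * vnorm x" unfolding L_def by (rule cs_abs[OF r x])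
  qed auto
  also have "\<dots> = ?F * vnorm x" by (simp add: L2_set_left_distrib vnorm_nonneg)
  finally show "vnorm (A *\<^sub>v x) \<le> ?F * vnorm x" .
qed


lemma vnorm_sym: assumes "x \<in> carrier_vec n" "y \<in> carrier_vec n" shows "vnorm (x - y) = vnorm (y - x)"
proof -
  have "vnorm (x - y) = L2_set (\<lambda>i. x$i - y$i) {..<n}" using assms by (auto simp: vnorm_L2 intro!: L2_set_cong)
  also have "\<dots> = L2_set (\<lambda>i. y$i - x$i) {..<n}" unfolding L2_set_def by (simp add: power2_commute)
  also have "\<dots> = vnorm (y - x)" using assms by (auto simp: vnorm_L2 intro!: L2_set_cong)
  finally show ?thesis .
qed

lemma sn_set: assumes A: "A \<in> carrier_mat n m"
  shows "bdd_above {vnorm (A *\<^sub>v x) | x. x \<in> carrier_vec (dim_col A) \<and> vnorm x \<le> 1}"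
    and "{vnorm (A *\<^sub>v x) | x. x \<in> carrier_vec (dim_col A) \<and> vnorm x \<le> 1} \<noteq> {}"
proof -
  obtain F where F: "F \<ge> 0" "\<forall>x\<in>carrier_vec m. vnorm (A *\<^sub>v x) \<le> F * vnorm x" using mat_bound[OF A] by blast
  show "bdd_above {vnorm (A *\<^sub>v x) | x. x \<in> carrier_vec (dim_col A) \<and> vnorm x \<le> 1}"
  proof (rule bdd_aboveI[where M=F], clarify)
    fix x :: "real vec" assume x: "x \<in> carrier_vec (dim_col A)" "vnorm x \<le> 1"
    have "vnorm (A *\<^sub>v x) \<le> F * vnorm x" using F x A by auto
    also have "\<dots> \<le> F" using F x mult_left_mono[of "vnorm x" 1 F] by auto
    finally show "vnorm (A *\<^sub>v x) \<le> F" .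
  qed
  have "0\<^sub>v m \<in> carrier_vec (dim_col A)" using A by auto
  then show "{vnorm (A *\<^sub>v x) | x. x \<in> carrier_vec (dim_col A) \<and> vnorm x \<le> 1} \<noteq> {}" by force
qed

lemma sn_le: assumes A: "A \<in> carrier_mat n m" and x: "x \<in> carrier_vec m"
  shows "vnorm (A *\<^sub>v x) \<le> spec_norm A * vnorm x"
proof (cases "vnorm x = 0")
  case True
  then have "x = 0\<^sub>v m" using vnorm_zero x by blast
  moreover have "A *\<^sub>v 0\<^sub>v m = 0\<^sub>v n" using A by auto
  ultimately show ?thesis using True by simp
next
  case False
  then have pos: "vnorm x > 0" using vnorm_nonneg[of x] by linarith
  define u where "u = (1 / vnorm x) \<cdot>\<^sub>v x"
  have u: "u \<in> carrier_vec (dim_col A)" "vnorm u \<le> 1" using x A pos by (auto simp: u_def vnorm_smult)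
  have Au: "A *\<^sub>v u = (1 / vnorm x) \<cdot>\<^sub>v (A *\<^sub>v x)" unfolding u_def using mult_mat_vec[OF A x] .
  have "vnorm (A *\<^sub>v u) \<le> spec_norm A" unfolding spec_norm_def
    by (rule cSup_upper[OF _ sn_set(1)[OF A]]) (use u in blast)
  then have "vnorm (A *\<^sub>v x) / vnorm x \<le> spec_norm A" using pos by (simp add: Au vnorm_smult)
  then show ?thesis using pos by (simp add: divide_le_eq mult.commute)
qed

lemma sn_leI: assumes A: "A \<in> carrier_mat n m" and c: "0 \<le> c"
  and h: "\<And>x. x \<in> carrier_vec m \<Longrightarrow> vnorm (A *\<^sub>v x) \<le> c * vnorm x"
  shows "spec_norm A \<le> c"
  unfolding spec_norm_def
proof (rule cSup_least[OF sn_set(2)[OF A]], clarify)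
  fix x :: "real vec" assume x: "x \<in> carrier_vec (dim_col A)" "vnorm x \<le> 1"
  then have "vnorm (A *\<^sub>v x) \<le> c * vnorm x" using h A by auto
  also have "\<dots> \<le> c" using c x mult_left_mono[of "vnorm x" 1 c] by auto
  finally show "vnorm (A *\<^sub>v x) \<le> c" .
qed

lemma sn_nonneg: assumes A: "A \<in> carrier_mat n m" shows "0 \<le> spec_norm A"
proof -
  have z: "0\<^sub>v m \<in> carrier_vec (dim_col A)" using A by simp
  have mem: "vnorm (A *\<^sub>v 0\<^sub>v m) \<in> {vnorm (A *\<^sub>v x) | x. x \<in> carrier_vec (dim_col A) \<and> vnorm x \<le> 1}"
    using z by (intro CollectI exI[of _ "0\<^sub>v m"]) simp
  have "vnorm (A *\<^sub>v 0\<^sub>v m) \<le> spec_norm A" unfolding spec_norm_def by (rule cSup_upper[OF mem sn_set(1)[OF A]])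
  then show ?thesis using vnorm_nonneg[of "A *\<^sub>v 0\<^sub>v m"] by linarith
qed
lemma sn_le_iff: assumes A: "A \<in> carrier_mat n m"
  shows "spec_norm A \<le> c \<longleftrightarrow> (\<forall>x\<in>carrier_vec m. vnorm x \<le> 1 \<longrightarrow> vnorm (A *\<^sub>v x) \<le> c)"
proof -
  have dc: "dim_col A = m" using A by simp
  have "spec_norm A \<le> c \<longleftrightarrow> (\<forall>y\<in>{vnorm (A *\<^sub>v x) | x. x \<in> carrier_vec (dim_col A) \<and> vnorm x \<le> 1}. y \<le> c)"
    unfolding spec_norm_def by (rule cSup_le_iff[OF sn_set(2)[OF A] sn_set(1)[OF A]])
  also have "\<dots> \<longleftrightarrow> (\<forall>x\<in>carrier_vec m. vnorm x \<le> 1 \<longrightarrow> vnorm (A *\<^sub>v x) \<le> c)"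
    unfolding dc by blast
  finally show ?thesis .
qed
lemma inv_bound: assumes M: "M \<in> carrier_mat n n" and c: "c > 0"
  and low: "\<And>x. x \<in> carrier_vec n \<Longrightarrow> c * vnorm x \<le> vnorm (M *\<^sub>v x)"
  shows "mat_inv M \<in> carrier_mat n n" "mat_inv M * M = 1\<^sub>m n" "M * mat_inv M = 1\<^sub>m n"
    "\<forall>y\<in>carrier_vec n. vnorm (mat_inv M *\<^sub>v y) \<le> (1/c) * vnorm y"
proof -
  have "Determinant.det M \<noteq> 0"
  proof
    assume "Determinant.det M = 0"
    then obtain v where v: "v \<in> carrier_vec n" "v \<noteq> 0\<^sub>v n" "M *\<^sub>v v = 0\<^sub>v n"
      using det_0_iff_vec_prod_zero[OF M] by blast
    have "c * vnorm v \<le> 0" using low[OF v(1)] v(3) by simp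
    then have "vnorm v = 0" using c vnorm_nonneg[of v] by (simp add: mult_le_0_iff)
    then show False using vnorm_zero[OF v(1)] v(2) by blast
  qed
  from det_non_zero_imp_unit[OF M this, of "()"] have U: "M \<in> Units (ring_mat TYPE(real) n ())" .
  have "mat_inverse M \<noteq> None"
  proof
    assume "mat_inverse M = None"
    from mat_inverse(1)[OF M this, of "()"] U show False by simp
  qed
  then obtain B where B: "mat_inverse M = Some B" by blast
  have mi: "mat_inv M = B" unfolding mat_inv_def B by simp
  from mat_inverse(2)[OF M B] have BB: "M * B = 1\<^sub>m n" "B * M = 1\<^sub>m n" "B \<in> carrier_mat n n" by simp_all
  show "mat_inv M \<in> carrier_mat n n" "mat_inv M * M = 1\<^sub>m n" "M * mat_inv M = 1\<^sub>m n" unfolding mi by (rule BB)+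
  show "\<forall>y\<in>carrier_vec n. vnorm (mat_inv M *\<^sub>v y) \<le> (1/c) * vnorm y"
  proof
    fix y :: "real vec" assume y: "y \<in> carrier_vec n"
    have By: "B *\<^sub>v y \<in> carrier_vec n" using mult_mat_vec_carrier[OF BB(3) y] .
    have "M *\<^sub>v (B *\<^sub>v y) = y" using assoc_mult_mat_vec[OF M BB(3) y] BB(1) one_mult_mat_vec[OF y] by simp
    then have "c * vnorm (B *\<^sub>v y) \<le> vnorm y" using low[OF By] by simp
    then have "vnorm (B *\<^sub>v y) \<le> vnorm y / c" using c by (simp add: le_divide_eq mult.commute)
    then show "vnorm (mat_inv M *\<^sub>v y) \<le> (1/c) * vnorm y" using mi by simp
  qed
qed
lemma perturb:
  assumes S: "S \<in> carrier_mat n n" and T: "T \<in> carrier_mat n n" and k: "k > 0"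
    and low: "\<And>x. x \<in> carrier_vec n \<Longrightarrow> k * vnorm x \<le> vnorm (T *\<^sub>v x)"
    and e: "spec_norm (S - T) \<le> e" and ek: "e \<le> k / 2"
  shows "spec_norm (mat_inv S - mat_inv T) \<le> 2 / k^2 * e"
proof -
  have ST: "S - T \<in> carrier_mat n n" "T - S \<in> carrier_mat n n" using S T by (auto simp: minus_carrier_mat)
  have e0: "0 \<le> e" using sn_nonneg[OF ST(1)] e by linarith
  have lowS: "(k/2) * vnorm x \<le> vnorm (S *\<^sub>v x)" if x: "x \<in> carrier_vec n" for x
  proof -
    have "vnorm ((S - T) *\<^sub>v x) \<le> spec_norm (S - T) * vnorm x" using sn_le[OF ST(1) x] .
    also have "\<dots> \<le> e * vnorm x" using e vnorm_nonneg[of x] by (simp add: mult_right_mono)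
    finally have 1: "vnorm (S *\<^sub>v x - T *\<^sub>v x) \<le> e * vnorm x" using minus_mult_distrib_mat_vec[OF S T x] by simp
    have "vnorm (T *\<^sub>v x) - vnorm (S *\<^sub>v x) \<le> vnorm (T *\<^sub>v x - S *\<^sub>v x)"
      by (rule vnorm_minus[of _ n]) (use T S x in auto)
    also have "vnorm (T *\<^sub>v x - S *\<^sub>v x) = vnorm (S *\<^sub>v x - T *\<^sub>v x)"
      by (rule vnorm_sym[of _ n]) (use T S x in auto)
    finally have "vnorm (T *\<^sub>v x) - vnorm (S *\<^sub>v x) \<le> e * vnorm x" using 1 by linarith
    then show ?thesis using low[OF x] ek vnorm_nonneg[of x] mult_right_mono[of e "k/2" "vnorm x"] by (simp add: algebra_simps)
  qed
  have k2: "k/2 > 0" using k by simp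
  note IS = inv_bound[OF S k2 lowS]
  note IT = inv_bound[OF T k low]
  show ?thesis
  proof (rule sn_leI[of _ n n])
    show "mat_inv S - mat_inv T \<in> carrier_mat n n" using IS(1) IT(1) by (auto simp: minus_carrier_mat)
    show "0 \<le> 2 / k^2 * e" using k e0 by simp
    fix y :: "real vec" assume y: "y \<in> carrier_vec n"
    define z where "z = mat_inv T *\<^sub>v y"
    have z: "z \<in> carrier_vec n" using IT y z_def by auto
    have Tz: "T *\<^sub>v z = y" unfolding z_def using assoc_mult_mat_vec[OF T IT(1) y] IT(3) y by simp
    have SiS: "mat_inv S *\<^sub>v (S *\<^sub>v z) = z" using assoc_mult_mat_vec[OF IS(1) S z] IS(2) z by simp
    have "(mat_inv S - mat_inv T) *\<^sub>v y = mat_inv S *\<^sub>v y - z"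
      unfolding z_def using minus_mult_distrib_mat_vec[OF IS(1) IT(1) y] .
    also have "\<dots> = mat_inv S *\<^sub>v y - mat_inv S *\<^sub>v (S *\<^sub>v z)" using SiS by simp
    also have "\<dots> = mat_inv S *\<^sub>v (y - S *\<^sub>v z)" using mult_minus_distrib_mat_vec[OF IS(1) y, of "S *\<^sub>v z"] S z by auto
    also have "y - S *\<^sub>v z = (T - S) *\<^sub>v z" using minus_mult_distrib_mat_vec[OF T S z] Tz by simp
    finally have eq: "(mat_inv S - mat_inv T) *\<^sub>v y = mat_inv S *\<^sub>v ((T - S) *\<^sub>v z)" .
    have TSz: "(T - S) *\<^sub>v z \<in> carrier_vec n" using mult_mat_vec_carrier[OF ST(2) z] .
    have TSeq: "vnorm ((T - S) *\<^sub>v z) = vnorm ((S - T) *\<^sub>v z)"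
      unfolding minus_mult_distrib_mat_vec[OF T S z] minus_mult_distrib_mat_vec[OF S T z]
      by (rule vnorm_sym[of _ n]) (use T S z in auto)
    have a1: "vnorm ((mat_inv S - mat_inv T) *\<^sub>v y) \<le> (1/(k/2)) * vnorm ((T - S) *\<^sub>v z)"
      unfolding eq using IS(4) TSz by blast
    have a20: "spec_norm (S - T) * vnorm z \<le> e * vnorm z" by (rule mult_right_mono[OF e vnorm_nonneg])
    have a2: "vnorm ((T - S) *\<^sub>v z) \<le> e * vnorm z"
      using sn_le[OF ST(1) z] a20 TSeq by linarith
    have a3: "vnorm z \<le> (1/k) * vnorm y" unfolding z_def using IT(4) y by blast
    have "e * vnorm z \<le> e * ((1/k) * vnorm y)" using a3 e0 by (rule mult_left_mono)
    with a2 have "vnorm ((T - S) *\<^sub>v z) \<le> e * ((1/k) * vnorm y)" by linarith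
    then have "(1/(k/2)) * vnorm ((T - S) *\<^sub>v z) \<le> (1/(k/2)) * (e * ((1/k) * vnorm y))"
      using k by (intro mult_left_mono) auto
    also have "\<dots> = 2 / k^2 * e * vnorm y" by (simp add: power2_eq_square)
    finally show "vnorm ((mat_inv S - mat_inv T) *\<^sub>v y) \<le> 2 / k^2 * e * vnorm y" using a1 by linarith
  qed
qed



lemma sym_inner: fixes A :: "real mat" assumes A: "A \<in> carrier_mat n n" and sym: "\<And>i j. i < n \<Longrightarrow> j < n \<Longrightarrow> A $$ (i,j) = A $$ (j,i)"
  and x: "x \<in> carrier_vec n" and y: "y \<in> carrier_vec n"
  shows "x \<bullet> (A *\<^sub>v y) = (A *\<^sub>v x) \<bullet> y"
proof -
  have T: "transpose_mat A = A" using A sym by (intro eq_matI) auto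
  have "(transpose_mat A *\<^sub>v x) \<bullet> y = x \<bullet> (A *\<^sub>v y)" using transpose_vec_mult_scalar[of A n n y x] A x y by simp
  then show ?thesis using T by simp
qed

lemma quad_low: fixes B :: "real mat" assumes B: "B \<in> carrier_mat n n" and sym: "\<And>x y. x \<in> carrier_vec n \<Longrightarrow> y \<in> carrier_vec n \<Longrightarrow> x \<bullet> (B *\<^sub>v y) = (B *\<^sub>v x) \<bullet> y"
  and psd: "\<And>x. x \<in> carrier_vec n \<Longrightarrow> 0 \<le> x \<bullet> (B *\<^sub>v x)"
  and D: "D > 0" and Dle: "\<And>x. x \<in> carrier_vec n \<Longrightarrow> vnorm (B *\<^sub>v x) \<le> D * vnorm x"
  and x: "x \<in> carrier_vec n"
  shows "(vnorm (B *\<^sub>v x))^2 \<le> D * (x \<bullet> (B *\<^sub>v x))"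
proof -
  define y where "y = B *\<^sub>v x"
  define s where "s = 1 / D"
  have y: "y \<in> carrier_vec n" unfolding y_def using B x by simp
  have By: "B *\<^sub>v y \<in> carrier_vec n" using B y by simp
  have sy: "s \<cdot>\<^sub>v y \<in> carrier_vec n" using y by simp
  have sBy: "s \<cdot>\<^sub>v (B *\<^sub>v y) \<in> carrier_vec n" using By by simp
  have xy: "x - s \<cdot>\<^sub>v y \<in> carrier_vec n" using x sy by simp
  have e1: "B *\<^sub>v (x - s \<cdot>\<^sub>v y) = y - s \<cdot>\<^sub>v (B *\<^sub>v y)"
    using mult_minus_distrib_mat_vec[OF B x sy] mult_mat_vec[OF B y] y_def by simp
  have "(x - s \<cdot>\<^sub>v y) \<bullet> (y - s \<cdot>\<^sub>v (B *\<^sub>v y)) = x \<bullet> (y - s \<cdot>\<^sub>v (B *\<^sub>v y)) - (s \<cdot>\<^sub>v y) \<bullet> (y - s \<cdot>\<^sub>v (B *\<^sub>v y))"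
    by (rule minus_scalar_prod_distrib[OF x sy]) (use y sBy in simp)
  also have "x \<bullet> (y - s \<cdot>\<^sub>v (B *\<^sub>v y)) = x \<bullet> y - s * (x \<bullet> (B *\<^sub>v y))"
    using scalar_prod_minus_distrib[OF x y sBy] scalar_prod_smult_distrib[OF x By] by simp
  also have "(s \<cdot>\<^sub>v y) \<bullet> (y - s \<cdot>\<^sub>v (B *\<^sub>v y)) = s * (y \<bullet> y) - s * s * (y \<bullet> (B *\<^sub>v y))"
    using scalar_prod_minus_distrib[OF sy y sBy] smult_scalar_prod_distrib[OF y y] 
      smult_scalar_prod_distrib[OF y sBy] scalar_prod_smult_distrib[OF y By] by simp
  finally have ex: "(x - s \<cdot>\<^sub>v y) \<bullet> (B *\<^sub>v (x - s \<cdot>\<^sub>v y)) = x \<bullet> y - s * (x \<bullet> (B *\<^sub>v y)) - (s * (y \<bullet> y) - s * s * (y \<bullet> (B *\<^sub>v y)))"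
    unfolding e1 .
  have xBy: "x \<bullet> (B *\<^sub>v y) = y \<bullet> y" using sym[OF x y] y_def by simp
  have yy: "y \<bullet> y = (vnorm y)^2" by (simp add: vnorm_sq)
  have "y \<bullet> (B *\<^sub>v y) \<le> vnorm y * vnorm (B *\<^sub>v y)" using cs_abs[OF y By] by linarith
  also have "\<dots> \<le> vnorm y * (D * vnorm y)" using mult_left_mono[OF Dle[OF y] vnorm_nonneg[of y]] .
  finally have yBy: "y \<bullet> (B *\<^sub>v y) \<le> D * (vnorm y)^2" by (simp add: power2_eq_square algebra_simps)
  have "0 \<le> (x - s \<cdot>\<^sub>v y) \<bullet> (B *\<^sub>v (x - s \<cdot>\<^sub>v y))" using psd[OF xy] .
  then have "0 \<le> x \<bullet> y - 2 * s * (vnorm y)^2 + s * s * (y \<bullet> (B *\<^sub>v y))" unfolding ex xBy yy by simp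
  moreover have "s * s * (y \<bullet> (B *\<^sub>v y)) \<le> s * s * (D * (vnorm y)^2)" using yBy by (intro mult_left_mono) auto
  ultimately have "0 \<le> x \<bullet> y - 2 * s * (vnorm y)^2 + s * s * (D * (vnorm y)^2)" by linarith
  also have "s * s * (D * (vnorm y)^2) = s * (vnorm y)^2" using D unfolding s_def by (simp add: power2_eq_square)
  finally have "s * (vnorm y)^2 \<le> x \<bullet> y" by simp
  then have "(vnorm y)^2 \<le> D * (x \<bullet> y)" using D unfolding s_def by (simp add: field_simps)
  then show ?thesis unfolding y_def .
qed



lemma smult_one_mv: "(z::real vec) \<in> carrier_vec n \<Longrightarrow> (m \<cdot>\<^sub>m 1\<^sub>m n) *\<^sub>v z = m \<cdot>\<^sub>v z"
  by (intro eq_vecI) (auto simp: scalar_prod_left_unit)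

lemma vec_minus_zero: "(a::real vec) \<in> carrier_vec n \<Longrightarrow> b \<in> carrier_vec n \<Longrightarrow> a - b = 0\<^sub>v n \<Longrightarrow> a = b"
proof (intro eq_vecI)
  fix i assume "a \<in> carrier_vec n" "b \<in> carrier_vec n" "a - b = 0\<^sub>v n" "i < dim_vec b"
  then have "(a - b) $ i = 0" by simp
  then show "a $ i = b $ i" using \<open>i < dim_vec b\<close> \<open>a \<in> carrier_vec n\<close> \<open>b \<in> carrier_vec n\<close> by simp
qed auto

lemma det_inv: fixes M :: "real mat" assumes M: "M \<in> carrier_mat n n" and d: "Determinant.det M \<noteq> 0"
  shows "\<exists>Bi. Bi \<in> carrier_mat n n \<and> Bi * M = 1\<^sub>m n \<and> M * Bi = 1\<^sub>m n \<and> mat_inv M = Bi"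
proof -
  from det_non_zero_imp_unit[OF M d, of "()"] have U: "M \<in> Units (ring_mat TYPE(real) n ())" .
  have "mat_inverse M \<noteq> None"
  proof
    assume "mat_inverse M = None"
    from mat_inverse(1)[OF M this, of "()"] U show False by simp
  qed
  then obtain B where B: "mat_inverse M = Some B" by blast
  have mi: "mat_inv M = B" unfolding mat_inv_def B by simp
  from mat_inverse(2)[OF M B] have BB: "M * B = 1\<^sub>m n" "B * M = 1\<^sub>m n" "B \<in> carrier_mat n n" by simp_all
  then show ?thesis using mi by blast
qed

lemma unit_scale: assumes z: "(z::real vec) \<in> carrier_vec n" and r: "vnorm z > 0"
  shows "(1 / vnorm z) \<cdot>\<^sub>v z \<in> carrier_vec n" "vnorm ((1 / vnorm z) \<cdot>\<^sub>v z) = 1"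
  using z r by (auto simp: vnorm_smult)

lemma quad_scale: fixes A :: "real mat" assumes A: "A \<in> carrier_mat n n" and z: "z \<in> carrier_vec n"
  shows "((c \<cdot>\<^sub>v z) \<bullet> (A *\<^sub>v (c \<cdot>\<^sub>v z))) = c^2 * (z \<bullet> (A *\<^sub>v z))"
proof -
  have Az: "A *\<^sub>v z \<in> carrier_vec n" using A z by simp
  have "A *\<^sub>v (c \<cdot>\<^sub>v z) = c \<cdot>\<^sub>v (A *\<^sub>v z)" by (rule mult_mat_vec[OF A z])
  then show ?thesis using smult_scalar_prod_distrib[OF z, of "c \<cdot>\<^sub>v (A *\<^sub>v z)"] scalar_prod_smult_distrib[OF z Az] Az
    by (simp add: power2_eq_square)
qed

lemma eig_low: fixes Sg :: "real mat"
  assumes Sg: "Sg \<in> carrier_mat n n" and sym: "\<And>i j. i < n \<Longrightarrow> j < n \<Longrightarrow> Sg $$ (i,j) = Sg $$ (j,i)"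
    and k: "0 < k" and eig: "\<And>ev. eigenvalue Sg ev \<Longrightarrow> k \<le> ev" and x: "x \<in> carrier_vec n"
  shows "k * vnorm x \<le> vnorm (Sg *\<^sub>v x)"
proof -
  define q where "q z = z \<bullet> (Sg *\<^sub>v z)" for z
  have Q: "\<forall>z\<in>carrier_vec n. k * (z \<bullet> z) \<le> q z"
  proof (rule ccontr)
    assume "\<not> (\<forall>z\<in>carrier_vec n. k * (z \<bullet> z) \<le> q z)"
    then obtain x0 where x0: "x0 \<in> carrier_vec n" "q x0 < k * (x0 \<bullet> x0)" by (auto simp: not_le)
    have r0: "vnorm x0 > 0"
    proof (rule ccontr)
      assume "\<not> vnorm x0 > 0"
      then have "vnorm x0 = 0" using vnorm_nonneg[of x0] by linarith
      then have "x0 = 0\<^sub>v n" using vnorm_zero[OF x0(1)] by blast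
      then show False using x0 Sg unfolding q_def by simp
    qed
    define u0 where "u0 = (1 / vnorm x0) \<cdot>\<^sub>v x0"
    have u0: "u0 \<in> carrier_vec n" "vnorm u0 = 1" using unit_scale[OF x0(1) r0] u0_def by auto
    have "q u0 = (1 / vnorm x0)^2 * q x0" unfolding u0_def q_def by (rule quad_scale[OF Sg x0(1)])
    also have "\<dots> < (1 / vnorm x0)^2 * (k * (x0 \<bullet> x0))" using x0(2) r0 by (intro mult_strict_left_mono) auto
    also have "\<dots> = k" using r0 by (simp add: vnorm_sq[symmetric] power2_eq_square field_simps)
    finally have qu0: "q u0 < k" .
    obtain F where F: "F \<ge> 0" "\<forall>z\<in>carrier_vec n. vnorm (Sg *\<^sub>v z) \<le> F * vnorm z" using mat_bound[OF Sg] by blast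
    define U where "U = q ` {u \<in> carrier_vec n. vnorm u = 1}"
    have Une: "U \<noteq> {}" using u0 U_def by blast
    have Ubdd: "bdd_below U" unfolding U_def
    proof (rule bdd_belowI[where m="-F"], clarify)
      fix u :: "real vec" assume u: "u \<in> carrier_vec n" "vnorm u = 1"
      have "\<bar>q u\<bar> \<le> vnorm u * vnorm (Sg *\<^sub>v u)" unfolding q_def using cs_abs[of u n "Sg *\<^sub>v u"] u Sg by simp
      also have "\<dots> \<le> F" using F(2) u(1) u(2) by (metis mult.commute mult_1)
      finally show "- F \<le> q u" by linarith
    qed
    define m where "m = Inf U"
    have mu0: "m \<le> q u0" unfolding m_def U_def using u0 Ubdd unfolding U_def by (intro cInf_lower) auto
    have mlow: "m * (z \<bullet> z) \<le> q z" if z: "z \<in> carrier_vec n" for z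
    proof (cases "vnorm z = 0")
      case True
      then have "z = 0\<^sub>v n" using vnorm_zero[OF z] by blast
      then show ?thesis using Sg unfolding q_def by simp
    next
      case False
      then have r: "vnorm z > 0" using vnorm_nonneg[of z] by linarith
      define u where "u = (1 / vnorm z) \<cdot>\<^sub>v z"
      have u: "u \<in> carrier_vec n" "vnorm u = 1" using unit_scale[OF z r] u_def by auto
      have "m \<le> q u" unfolding m_def U_def using u Ubdd unfolding U_def by (intro cInf_lower) auto
      also have "q u = (1 / vnorm z)^2 * q z" unfolding u_def q_def by (rule quad_scale[OF Sg z])
      finally have "m \<le> q z / (vnorm z)^2" by (simp add: power_divide)
      then have "m * (vnorm z)^2 \<le> q z" using r by (simp add: le_divide_eq)
      then show ?thesis by (simp add: vnorm_sq)
    qed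
    define B where "B = Sg - m \<cdot>\<^sub>m 1\<^sub>m n"
    have Bc: "B \<in> carrier_mat n n" unfolding B_def using Sg by (auto simp: minus_carrier_mat)
    have Bv: "B *\<^sub>v z = Sg *\<^sub>v z - m \<cdot>\<^sub>v z" if z: "z \<in> carrier_vec n" for z
      unfolding B_def using minus_mult_distrib_mat_vec[OF Sg _ z, of "m \<cdot>\<^sub>m 1\<^sub>m n"] smult_one_mv[OF z] by simp
    have qB: "z \<bullet> (B *\<^sub>v z) = q z - m * (z \<bullet> z)" if z: "z \<in> carrier_vec n" for z
      unfolding Bv[OF z] q_def using scalar_prod_minus_distrib[OF z, of "Sg *\<^sub>v z" "m \<cdot>\<^sub>v z"] Sg z
        scalar_prod_smult_distrib[OF z z] by simp
    have psd: "0 \<le> z \<bullet> (B *\<^sub>v z)" if z: "z \<in> carrier_vec n" for z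
      using qB[OF z] mlow[OF z] by simp
    have symB: "z \<bullet> (B *\<^sub>v w) = (B *\<^sub>v z) \<bullet> w" if z: "z \<in> carrier_vec n" and w: "w \<in> carrier_vec n" for z w
    proof -
      have "z \<bullet> (B *\<^sub>v w) = z \<bullet> (Sg *\<^sub>v w) - m * (z \<bullet> w)"
        unfolding Bv[OF w] using scalar_prod_minus_distrib[OF z, of "Sg *\<^sub>v w" "m \<cdot>\<^sub>v w"] Sg w
          scalar_prod_smult_distrib[OF z w] by simp
      also have "\<dots> = (Sg *\<^sub>v z) \<bullet> w - m * (z \<bullet> w)" using sym_inner[OF Sg sym z w] by simp
      also have "\<dots> = (B *\<^sub>v z) \<bullet> w"
        unfolding Bv[OF z] using minus_scalar_prod_distrib[of "Sg *\<^sub>v z" n "m \<cdot>\<^sub>v z" w] Sg z w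
          smult_scalar_prod_distrib[OF z w] by simp
      finally show ?thesis .
    qed
    have dB: "Determinant.det B \<noteq> 0"
    proof
      assume "Determinant.det B = 0"
      then obtain v where v: "v \<in> carrier_vec n" "v \<noteq> 0\<^sub>v n" "B *\<^sub>v v = 0\<^sub>v n"
        using det_0_iff_vec_prod_zero[OF Bc] by blast
      have "Sg *\<^sub>v v = m \<cdot>\<^sub>v v" using vec_minus_zero[of "Sg *\<^sub>v v" n "m \<cdot>\<^sub>v v"] v Sg Bv[OF v(1)] by simp
      then have "eigenvalue Sg m" unfolding eigenvalue_def eigenvector_def using v Sg by auto
      then have "k \<le> m" by (rule eig)
      then show False using mu0 qu0 by linarith
    qed
    obtain Bi where Bi: "Bi \<in> carrier_mat n n" "Bi * B = 1\<^sub>m n" using det_inv[OF Bc dB] by blast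
    obtain G where G: "G \<ge> 0" "\<forall>z\<in>carrier_vec n. vnorm (Bi *\<^sub>v z) \<le> G * vnorm z" using mat_bound[OF Bi(1)] by blast
    obtain F' where F': "F' \<ge> 0" "\<forall>z\<in>carrier_vec n. vnorm (B *\<^sub>v z) \<le> F' * vnorm z" using mat_bound[OF Bc] by blast
    define D where "D = F' + 1"
    have D: "D > 0" using F' D_def by simp
    have Dle: "vnorm (B *\<^sub>v z) \<le> D * vnorm z" if z: "z \<in> carrier_vec n" for z
      using F'(2) z vnorm_nonneg[of z] unfolding D_def by (auto simp: algebra_simps intro: order_trans)
    have key: "1 \<le> G^2 * D * (u \<bullet> (B *\<^sub>v u))" if u: "u \<in> carrier_vec n" "vnorm u = 1" for u
    proof -
      have Bu: "B *\<^sub>v u \<in> carrier_vec n" using Bc u by simp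
      have "u = Bi *\<^sub>v (B *\<^sub>v u)" using assoc_mult_mat_vec[OF Bi(1) Bc u(1)] Bi(2) u by simp
      then have "vnorm u \<le> G * vnorm (B *\<^sub>v u)" using G(2) Bu by metis
      then have 1: "1 \<le> G * vnorm (B *\<^sub>v u)" using u by simp
      then have "1 \<le> (G * vnorm (B *\<^sub>v u))^2" by (simp add: one_le_power)
      also have "\<dots> = G^2 * (vnorm (B *\<^sub>v u))^2" by (simp add: power_mult_distrib)
      also have "\<dots> \<le> G^2 * (D * (u \<bullet> (B *\<^sub>v u)))"
        using quad_low[OF Bc symB psd D Dle u(1)] by (intro mult_left_mono) auto
      finally show ?thesis by (simp add: mult.assoc)
    qed
    have GD: "G^2 * D > 0"
    proof -
      have "1 \<le> G^2 * D * (u0 \<bullet> (B *\<^sub>v u0))" using key u0 by blast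
      then have "G \<noteq> 0" by auto
      then show ?thesis using D by simp
    qed
    define \<eta> where "\<eta> = 1 / (G^2 * D)"
    have eta: "\<eta> > 0" using GD \<eta>_def by simp
    have "m + \<eta> \<le> m" unfolding m_def
    proof (rule cInf_greatest[OF Une])
      fix t assume "t \<in> U"
      then obtain u where u: "u \<in> carrier_vec n" "vnorm u = 1" "t = q u" unfolding U_def by blast
      have "1 \<le> G^2 * D * (u \<bullet> (B *\<^sub>v u))" using key u by blast
      then have "\<eta> \<le> u \<bullet> (B *\<^sub>v u)" using GD unfolding \<eta>_def by (simp add: divide_le_eq mult.commute)
      also have "\<dots> = q u - m * (u \<bullet> u)" by (rule qB[OF u(1)])
      also have "u \<bullet> u = 1" using u(2) vnorm_sq[of u] by simp
      finally show "Inf U + \<eta> \<le> t" using u(3) m_def by simp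
    qed
    then show False using eta by simp
  qed
  have Sx: "Sg *\<^sub>v x \<in> carrier_vec n" using Sg x by simp
  have "k * (vnorm x)^2 \<le> q x" using Q x by (simp add: vnorm_sq)
  also have "\<dots> \<le> vnorm x * vnorm (Sg *\<^sub>v x)" unfolding q_def using cs_abs[OF x Sx] by linarith
  finally have h: "k * (vnorm x)^2 \<le> vnorm x * vnorm (Sg *\<^sub>v x)" .
  show ?thesis
  proof (cases "vnorm x = 0")
    case True then show ?thesis using vnorm_nonneg[of "Sg *\<^sub>v x"] by simp
  next
    case False
    then have "vnorm x > 0" using vnorm_nonneg[of x] by linarith
    then show ?thesis using h by (simp add: power2_eq_square mult.commute[of k] mult.assoc)
  qed
qed



lemma det_meas: fixes F :: "'x \<Rightarrow> nat \<times> nat \<Rightarrow> real"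
  assumes F: "\<And>i j. i < d \<Longrightarrow> j < d \<Longrightarrow> (\<lambda>\<omega>. F \<omega> (i,j)) \<in> borel_measurable N"
  shows "(\<lambda>\<omega>. Determinant.det (mat d d (F \<omega>))) \<in> borel_measurable N"
proof -
  define PS where "PS = {p. p permutes {0..<d}}"
  have eq: "Determinant.det (mat d d (F \<omega>)) = (\<Sum>p\<in>PS. signof p * (\<Prod>i=0..<d. F \<omega> (i, p i)))" for \<omega>
  proof -
    have "Determinant.det (mat d d (F \<omega>)) = (\<Sum>p\<in>PS. signof p * (\<Prod>i=0..<d. mat d d (F \<omega>) $$ (i, p i)))"
      unfolding det_def PS_def by simp
    also have "\<dots> = (\<Sum>p\<in>PS. signof p * (\<Prod>i=0..<d. F \<omega> (i, p i)))"
    proof (rule sum.cong[OF refl], rule arg_cong2[where f="(*)"], rule refl, rule prod.cong[OF refl])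
      fix p i assume p: "p \<in> PS" and i: "i \<in> {0..<d}"
      have "p i \<in> {0..<d}" using permutes_in_image p i unfolding PS_def by fastforce
      then show "mat d d (F \<omega>) $$ (i, p i) = F \<omega> (i, p i)" using i by simp
    qed
    finally show ?thesis .
  qed
  have "(\<lambda>\<omega>. \<Sum>p\<in>PS. signof p * (\<Prod>i=0..<d. F \<omega> (i, p i))) \<in> borel_measurable N"
  proof (rule borel_measurable_sum)
    fix p assume p: "p \<in> PS"
    have "(\<lambda>\<omega>. \<Prod>i=0..<d. F \<omega> (i, p i)) \<in> borel_measurable N"
    proof (rule borel_measurable_prod)
      fix i assume i: "i \<in> {0..<d}"
      have "p i \<in> {0..<d}" using permutes_in_image p i unfolding PS_def by fastforce
      then show "(\<lambda>\<omega>. F \<omega> (i, p i)) \<in> borel_measurable N" using F i by auto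
    qed
    then show "(\<lambda>\<omega>. signof p * (\<Prod>i=0..<d. F \<omega> (i, p i))) \<in> borel_measurable N"
      by (intro borel_measurable_times borel_measurable_const)
  qed
  then show ?thesis unfolding eq .
qed

lemma adj_entry: assumes "a < P" "b < P"
  shows "adj_mat (mat P P f) $$ (a,b) = (-1)^(b+a) * Determinant.det (mat (P-1) (P-1)
     (\<lambda>(i',j'). f (if i' < b then i' else Suc i', if j' < a then j' else Suc j')))"
proof -
  have "mat_delete (mat P P f) b a = mat (P-1) (P-1)
     (\<lambda>(i',j'). f (if i' < b then i' else Suc i', if j' < a then j' else Suc j'))"
    unfolding mat_delete_def using assms by (intro eq_matI) auto
  then show ?thesis unfolding adj_mat_def cofactor_def using assms by simp
qed

lemma inv_adj: fixes A :: "real mat" assumes A: "A \<in> carrier_mat P P" and d: "Determinant.det A \<noteq> 0"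
  shows "mat_inv A = (1 / Determinant.det A) \<cdot>\<^sub>m adj_mat A"
proof -
  obtain Bi where Bi: "Bi \<in> carrier_mat P P" "Bi * A = 1\<^sub>m P" "mat_inv A = Bi" using det_inv[OF A d] by blast
  define X where "X = (1 / Determinant.det A) \<cdot>\<^sub>m adj_mat A"
  have X: "X \<in> carrier_mat P P" unfolding X_def using adj_mat(1)[OF A] by simp
  have "A * X = (1 / Determinant.det A) \<cdot>\<^sub>m (A * adj_mat A)" unfolding X_def
    by (rule mult_smult_distrib[OF A adj_mat(1)[OF A]])
  also have "\<dots> = 1\<^sub>m P" unfolding adj_mat(2)[OF A] using d by (intro eq_matI) auto
  finally have AX: "A * X = 1\<^sub>m P" .
  have "Bi = Bi * (A * X)" unfolding AX using Bi(1) by simp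
  also have "\<dots> = (Bi * A) * X" using assoc_mult_mat[OF Bi(1) A X] by simp
  also have "\<dots> = X" unfolding Bi(2) using X by simp
  finally show ?thesis using Bi(3) X_def by simp
qed

lemma quad_formula: fixes Mi :: "real mat" assumes "Mi \<in> carrier_mat P P"
  shows "vec P y \<bullet> (Mi *\<^sub>v vec P y) = (\<Sum>a<P. y a * (\<Sum>b<P. Mi $$ (a,b) * y b))"
  using assms by (auto simp: atLeast0LessThan scalar_prod_def intro!: sum.cong)

definition quadE :: "nat \<Rightarrow> (nat \<times> nat \<Rightarrow> real) \<Rightarrow> (nat \<Rightarrow> real) \<Rightarrow> real" where
  "quadE P S y = (\<Sum>a<P. y a * (\<Sum>b<P. (adj_mat (mat P P S) $$ (a,b) / Determinant.det (mat P P S)) * y b))"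

lemma gd_formula:
  "gauss_dens P (to_mat P S) (to_vec P y) = (if Determinant.det (mat P P S) = 0 then 0 else
     (2*pi) powr (-real P/2) * Determinant.det (mat P P S) powr (-1/2) * exp (-(1/2) * quadE P S y))"
proof (cases "Determinant.det (mat P P S) = 0")
  case True
  then show ?thesis unfolding gauss_dens_def to_mat_def by simp
next
  case False
  have A: "mat P P S \<in> carrier_mat P P" by simp
  have "mat_inv (mat P P S) = (1 / Determinant.det (mat P P S)) \<cdot>\<^sub>m adj_mat (mat P P S)" by (rule inv_adj[OF A False])
  moreover have "(1 / Determinant.det (mat P P S)) \<cdot>\<^sub>m adj_mat (mat P P S) \<in> carrier_mat P P" using adj_mat(1)[OF A] by simp
  ultimately have "to_vec P y \<bullet> (mat_inv (mat P P S) *\<^sub>v to_vec P y) =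
     (\<Sum>a<P. y a * (\<Sum>b<P. ((1 / Determinant.det (mat P P S)) \<cdot>\<^sub>m adj_mat (mat P P S)) $$ (a,b) * y b))"
    unfolding to_vec_def by (simp add: quad_formula)
  also have "\<dots> = quadE P S y"
    unfolding quadE_def using adj_mat(1)[OF A] by (auto intro!: sum.cong)
  finally have "to_vec P y \<bullet> (mat_inv (mat P P S) *\<^sub>v to_vec P y) = quadE P S y" .
  then show ?thesis using False unfolding gauss_dens_def to_mat_def by simp
qed



lemma comp_S: "a < P \<Longrightarrow> b < P \<Longrightarrow> (\<lambda>S. S (a,b)) \<in> borel_measurable (param_space P)"
  unfolding param_space_def by (rule measurable_component_singleton) auto

lemma lik_meas:
  fixes yv :: "nat \<Rightarrow> 'a \<Rightarrow> nat \<Rightarrow> real" and N :: "'a measure"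
  assumes Y: "\<And>i. i < n \<Longrightarrow> yv i \<in> measurable N (obs_space P)"
  shows "(\<lambda>z. likelihood P n (\<lambda>i. yv i (fst z)) (snd z)) \<in> borel_measurable (N \<Otimes>\<^sub>M param_space P)"
proof -
  let ?M = "N \<Otimes>\<^sub>M param_space P"
  have cS: "(\<lambda>z. snd z (a,b)) \<in> borel_measurable ?M" if "a<P" "b<P" for a b
    using measurable_compose[OF measurable_snd comp_S[OF that]] .
  have cY: "(\<lambda>z. yv i (fst z) j) \<in> borel_measurable ?M" if "i<n" "j<P" for i j
  proof -
    have "(\<lambda>x. x j) \<in> borel_measurable (obs_space P)" unfolding obs_space_def
      using measurable_component_singleton[of j "{..<P}" "\<lambda>_. borel"] that(2) by simp
    then have "(\<lambda>\<omega>. yv i \<omega> j) \<in> borel_measurable N" using measurable_compose[OF Y[OF that(1)]] by blast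
    then show ?thesis using measurable_compose[OF measurable_fst] by blast
  qed
  define dd where "dd (z :: 'a \<times> (nat \<times> nat \<Rightarrow> real)) = Determinant.det (mat P P (snd z))" for z
  have dm[measurable]: "dd \<in> borel_measurable ?M" unfolding dd_def
    by (rule det_meas[where F="\<lambda>z. snd z"]) (rule cS)
  have adjm: "(\<lambda>z. adj_mat (mat P P (snd z)) $$ (a,b)) \<in> borel_measurable ?M" if ab: "a<P" "b<P" for a b
  proof -
    have "(\<lambda>z. Determinant.det (mat (P-1) (P-1) (\<lambda>(i',j'). snd z (if i' < b then i' else Suc i', if j' < a then j' else Suc j'))))
        \<in> borel_measurable ?M"
      by (rule det_meas) (auto intro!: cS simp: ab)
    then have "(\<lambda>z. (-1)^(b+a) * Determinant.det (mat (P-1) (P-1) (\<lambda>(i',j'). snd z (if i' < b then i' else Suc i', if j' < a then j' else Suc j'))))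
        \<in> borel_measurable ?M" by (intro borel_measurable_times borel_measurable_const)
    then show ?thesis by (simp add: adj_entry[OF ab])
  qed
  define qq where "qq i (z :: 'a \<times> (nat \<times> nat \<Rightarrow> real)) = quadE P (snd z) (yv i (fst z))" for i z
  have qm: "qq i \<in> borel_measurable ?M" if i: "i<n" for i
  proof -
    have "(\<lambda>z. \<Sum>a<P. yv i (fst z) a * (\<Sum>b<P. (adj_mat (mat P P (snd z)) $$ (a,b) / dd z) * yv i (fst z) b)) \<in> borel_measurable ?M"
      by (auto intro!: borel_measurable_sum borel_measurable_times borel_measurable_divide cY adjm dm i)
    then show ?thesis unfolding qq_def quadE_def dd_def by simp
  qed
  have gdm: "(\<lambda>z. gauss_dens P (to_mat P (snd z)) (to_vec P (yv i (fst z)))) \<in> borel_measurable ?M" if i: "i<n" for i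
  proof -
    have [measurable]: "qq i \<in> borel_measurable ?M" using qm[OF i] .
    have "(\<lambda>z. if dd z = 0 then 0 else (2*pi) powr (-real P/2) * dd z powr (-1/2) * exp (-(1/2) * qq i z)) \<in> borel_measurable ?M"
      by measurable
    moreover have "(\<lambda>z. gauss_dens P (to_mat P (snd z)) (to_vec P (yv i (fst z)))) =
        (\<lambda>z. if dd z = 0 then 0 else (2*pi) powr (-real P/2) * dd z powr (-1/2) * exp (-(1/2) * qq i z))"
      by (rule ext) (simp add: gd_formula dd_def qq_def)
    ultimately show ?thesis by simp
  qed
  have "(\<lambda>z. \<Prod>i<n. gauss_dens P (to_mat P (snd z)) (to_vec P (yv i (fst z)))) \<in> borel_measurable ?M"
    by (rule borel_measurable_prod) (use gdm in auto)
  then show ?thesis unfolding likelihood_def by simp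
qed

lemma param_id_meas: "(\<lambda>S. S) \<in> borel_measurable (param_space P)"
proof (rule measurable_coordinatewise_then_product)
  fix ij :: "nat \<times> nat"
  show "(\<lambda>S. S ij) \<in> borel_measurable (param_space P)"
  proof (cases "ij \<in> {..<P} \<times> {..<P}")
    case True
    then show ?thesis unfolding param_space_def by (intro measurable_component_singleton) auto
  next
    case False
    have "\<And>S. S \<in> space (param_space P) \<Longrightarrow> S ij = undefined"
      unfolding param_space_def space_PiM using PiE_arb False by blast
    then show ?thesis using measurable_cong[of "param_space P" "\<lambda>S. S ij" "\<lambda>S. undefined"] by simp
  qed
qed

lemma vnorm_formula: fixes C :: "real mat" assumes C: "C \<in> carrier_mat P P" and x: "x \<in> carrier_vec P"
  shows "vnorm ((mat P P S - C) *\<^sub>v x) = sqrt (\<Sum>i<P. (\<Sum>j<P. (S (i,j) - C $$ (i,j)) * x $ j)^2)"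
  unfolding vnorm_def using C x
  by (auto simp: scalar_prod_def atLeast0LessThan intro!: sum.cong arg_cong[where f=sqrt])

lemma closed_K: fixes C :: "real mat"
  shows "closed {S :: nat \<times> nat \<Rightarrow> real. \<forall>x. x \<in> carrier_vec P \<and> vnorm x \<le> 1 \<longrightarrow>
     sqrt (\<Sum>i<P. (\<Sum>j<P. (S (i,j) - C $$ (i,j)) * x $ j)^2) \<le> e}"
proof (rule closed_Collect_all)
  fix x :: "real vec"
  show "closed {S :: nat \<times> nat \<Rightarrow> real. x \<in> carrier_vec P \<and> vnorm x \<le> 1 \<longrightarrow>
     sqrt (\<Sum>i<P. (\<Sum>j<P. (S (i,j) - C $$ (i,j)) * x $ j)^2) \<le> e}"
  proof (cases "x \<in> carrier_vec P \<and> vnorm x \<le> 1")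
    case True
    have "closed {S :: nat \<times> nat \<Rightarrow> real. sqrt (\<Sum>i<P. (\<Sum>j<P. (S (i,j) - C $$ (i,j)) * x $ j)^2) \<le> e}"
      by (intro closed_Collect_le continuous_intros continuous_on_product_coordinates)
    then show ?thesis using True by simp
  next
    case False
    then have "{S :: nat \<times> nat \<Rightarrow> real. x \<in> carrier_vec P \<and> vnorm x \<le> 1 \<longrightarrow>
     sqrt (\<Sum>i<P. (\<Sum>j<P. (S (i,j) - C $$ (i,j)) * x $ j)^2) \<le> e} = UNIV" by blast
    then show ?thesis by simp
  qed
qed

lemma A_meas: fixes C :: "real mat" assumes C: "C \<in> carrier_mat P P"
  shows "{S \<in> space (param_space P). spec_norm (to_mat P S - C) > e} \<in> sets (param_space P)"
proof -
  define K where "K = {S :: nat \<times> nat \<Rightarrow> real. \<forall>x. x \<in> carrier_vec P \<and> vnorm x \<le> 1 \<longrightarrow>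
     sqrt (\<Sum>i<P. (\<Sum>j<P. (S (i,j) - C $$ (i,j)) * x $ j)^2) \<le> e}"
  have Kc: "closed K" unfolding K_def by (rule closed_K)
  have KS: "(\<lambda>S. S) -` K \<inter> space (param_space P) \<in> sets (param_space P)"
    by (rule measurable_sets[OF param_id_meas]) (use Kc in simp)
  have iff: "spec_norm (to_mat P S - C) \<le> e \<longleftrightarrow> S \<in> K" for S
  proof -
    have MC: "mat P P S - C \<in> carrier_mat P P" using C by (auto simp: minus_carrier_mat)
    show ?thesis unfolding to_mat_def sn_le_iff[OF MC] K_def using vnorm_formula[OF C] by auto
  qed
  have "{S \<in> space (param_space P). spec_norm (to_mat P S - C) > e} = space (param_space P) - ((\<lambda>S. S) -` K \<inter> space (param_space P))"
    unfolding not_le[symmetric] iff by auto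
  then show ?thesis using KS by simp
qed

lemma post_meas:
  assumes Y: "\<And>i. i < n \<Longrightarrow> yv i \<in> measurable N (obs_space P)"
    and mu: "prob_space mu" and ms: "sets mu = sets (param_space P)" and A: "A \<in> sets (param_space P)"
  shows "(\<lambda>\<omega>. posterior P n mu (\<lambda>i. yv i \<omega>) A) \<in> borel_measurable N"
proof -
  interpret mu: prob_space mu by (rule mu)
  have L0: "(\<lambda>z. likelihood P n (\<lambda>i. yv i (fst z)) (snd z)) \<in> borel_measurable (N \<Otimes>\<^sub>M param_space P)"
    by (rule lik_meas[OF Y])
  have eqm: "measurable (N \<Otimes>\<^sub>M mu) (borel :: real measure) = measurable (N \<Otimes>\<^sub>M param_space P) borel"
    by (rule measurable_cong_sets[OF sets_pair_measure_cong[OF refl ms] refl])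
  have L: "(\<lambda>z. likelihood P n (\<lambda>i. yv i (fst z)) (snd z)) \<in> borel_measurable (N \<Otimes>\<^sub>M mu)"
    using L0 eqm by simp
  have A': "A \<in> sets mu" using A ms by simp
  have I: "(\<lambda>z. indicator A (snd z) :: ennreal) \<in> borel_measurable (N \<Otimes>\<^sub>M mu)"
    using measurable_compose[OF measurable_snd borel_measurable_indicator[OF A']] .
  have num0: "(\<lambda>z. ennreal (likelihood P n (\<lambda>i. yv i (fst z)) (snd z)) * indicator A (snd z)) \<in> borel_measurable (N \<Otimes>\<^sub>M mu)"
    using L I by measurable
  have num: "(\<lambda>\<omega>. \<integral>\<^sup>+S. ennreal (likelihood P n (\<lambda>i. yv i \<omega>) S) * indicator A S \<partial>mu) \<in> borel_measurable N"
    by (rule mu.borel_measurable_nn_integral) (use num0 in \<open>simp add: case_prod_beta'\<close>)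
  have den0: "(\<lambda>z. ennreal (likelihood P n (\<lambda>i. yv i (fst z)) (snd z))) \<in> borel_measurable (N \<Otimes>\<^sub>M mu)"
    using L by measurable
  have den: "(\<lambda>\<omega>. \<integral>\<^sup>+S. ennreal (likelihood P n (\<lambda>i. yv i \<omega>) S) \<partial>mu) \<in> borel_measurable N"
    by (rule mu.borel_measurable_nn_integral) (use den0 in \<open>simp add: case_prod_beta'\<close>)
  show ?thesis unfolding posterior_def
    by (intro borel_measurable_enn2real borel_measurable_divide_ennreal num den)
qed



lemma post_mono: assumes "B \<subseteq> A" shows "posterior P n mu ys B \<le> posterior P n mu ys A"
proof -
  define f where "f S = ennreal (likelihood P n ys S)" for S
  define a where "a X = (\<integral>\<^sup>+S. f S * indicator X S \<partial>mu)" for X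
  define d where "d = (\<integral>\<^sup>+S. f S \<partial>mu)"
  have aBA: "a B \<le> a A" unfolding a_def
    by (rule nn_integral_mono) (use assms in \<open>auto simp: indicator_def\<close>)
  have aAd: "a A \<le> d" unfolding a_def d_def
    by (rule nn_integral_mono) (auto simp: indicator_def)
  have fin: "a A / d < Orderings.top"
  proof -
    have "a A / d \<noteq> Orderings.top"
    proof
      assume "a A / d = Orderings.top"
      then have "(a A \<noteq> 0 \<and> d = 0) \<or> (a A = Orderings.top \<and> d \<noteq> Orderings.top)" by (simp add: ennreal_divide_eq_top_iff)
      then show False using aAd by (auto simp: top_unique)
    qed
    then show ?thesis by (simp add: top.not_eq_extremum)
  qed
  have "enn2real (a B / d) \<le> enn2real (a A / d)"
    by (rule enn2real_mono[OF divide_right_mono_ennreal[OF aBA] fin])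
  then show ?thesis unfolding posterior_def a_def d_def f_def .
qed

theorem lemma4:
  fixes p :: "nat \<Rightarrow> nat"
    and M :: "nat \<Rightarrow> 'a measure"
    and Y :: "nat \<Rightarrow> nat \<Rightarrow> 'a \<Rightarrow> (nat \<Rightarrow> real)"
    and \<Sigma>0 :: "nat \<Rightarrow> real Matrix.mat"
    and \<mu> :: "nat \<Rightarrow> (nat \<times> nat \<Rightarrow> real) measure"
    and \<epsilon> :: "nat \<Rightarrow> real"
    and k\<sigma> \<sigma>0 :: real
  assumes prob: "\<And>n. prob_space (M n)"
    and meas: "\<And>n i. i < n \<Longrightarrow> Y n i \<in> measurable (M n) (obs_space (p n))"
    and indep: "\<And>n. prob_space.indep_vars (M n) (\<lambda>_. obs_space (p n)) (Y n) {..<n}"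
    and ident: "\<And>n i. i < n \<Longrightarrow>
        distr (M n) (obs_space (p n)) (Y n i) = distr (M n) (obs_space (p n)) (Y n 0)"
    and mean0: "\<And>n i j. i < n \<Longrightarrow> j < p n \<Longrightarrow>
        integrable (M n) (\<lambda>\<omega>. Y n i \<omega> j) \<and> (\<integral>\<omega>. Y n i \<omega> j \<partial>M n) = 0"
    and Sigma0_carrier: "\<And>n. \<Sigma>0 n \<in> carrier_mat (p n) (p n)"
    and cov: "\<And>n i j l. i < n \<Longrightarrow> j < p n \<Longrightarrow> l < p n \<Longrightarrow>
        integrable (M n) (\<lambda>\<omega>. Y n i \<omega> j * Y n i \<omega> l) \<and>
        \<Sigma>0 n $$ (j, l) = (\<integral>\<omega>. Y n i \<omega> j * Y n i \<omega> l \<partial>M n)"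
    and k_pos: "0 < k\<sigma>" and k_le1: "k\<sigma> \<le> 1"
    and eig: "\<And>n ev. eigenvalue (\<Sigma>0 n) ev \<Longrightarrow> k\<sigma> \<le> ev \<and> ev \<le> 1 / k\<sigma>"
    and sigma0_pos: "0 < \<sigma>0"
    and subg: "\<And>n i. i < n \<Longrightarrow>
        subgauss_norm_le (p n) (M n) (\<lambda>\<omega>. inv_sqrt_mat (\<Sigma>0 n) *\<^sub>v to_vec (p n) (Y n i \<omega>)) \<sigma>0"
    and prior_prob: "\<And>n. prob_space (\<mu> n)"
    and prior_sets: "\<And>n. sets (\<mu> n) = sets (param_space (p n))"
    and prior_pd: "\<And>n. AE S in \<mu> n. pos_def_mat (to_mat (p n) S)"
    and eps_lim: "\<epsilon> \<longlonglongrightarrow> 0"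
    and contr_Sigma: "to_zero_in_prob M (\<lambda>n \<omega>. posterior (p n) n (\<mu> n) (\<lambda>i. Y n i \<omega>)
        {S \<in> space (param_space (p n)). spec_norm (to_mat (p n) S - \<Sigma>0 n) > \<epsilon> n})"
  shows "\<exists>C>0. to_zero_in_prob M (\<lambda>n \<omega>. posterior (p n) n (\<mu> n) (\<lambda>i. Y n i \<omega>)
        {S \<in> space (param_space (p n)).
           spec_norm (mat_inv (to_mat (p n) S) - mat_inv (\<Sigma>0 n)) > C * \<epsilon> n})"
proof -
  define C where "C = 2 / k\<sigma>^2"
  have Cpos: "C > 0" using k_pos by (simp add: C_def)
  define A where "A n = {S \<in> space (param_space (p n)). spec_norm (to_mat (p n) S - \<Sigma>0 n) > \<epsilon> n}" for n
  define B where "B n = {S \<in> space (param_space (p n)).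
           spec_norm (mat_inv (to_mat (p n) S) - mat_inv (\<Sigma>0 n)) > C * \<epsilon> n}" for n
  have ev: "eventually (\<lambda>n. \<epsilon> n < k\<sigma>/2 \<and> 1 \<le> n) sequentially"
  proof -
    have "eventually (\<lambda>n. \<epsilon> n < k\<sigma>/2) sequentially" using order_tendstoD(2)[OF eps_lim, of "k\<sigma>/2"] k_pos by simp
    moreover have "eventually (\<lambda>n. 1 \<le> n) sequentially" by (rule eventually_ge_at_top)
    ultimately show ?thesis by (rule eventually_conj)
  qed
  have BA: "B n \<subseteq> A n" if n: "\<epsilon> n < k\<sigma>/2" "1 \<le> n" for n
  proof
    fix S assume S: "S \<in> B n"
    show "S \<in> A n"
    proof (rule ccontr)
      assume "S \<notin> A n"
      then have le: "spec_norm (to_mat (p n) S - \<Sigma>0 n) \<le> \<epsilon> n" using S unfolding A_def B_def by auto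
      have sym: "\<Sigma>0 n $$ (j,l) = \<Sigma>0 n $$ (l,j)" if "j < p n" "l < p n" for j l
      proof -
        have "\<Sigma>0 n $$ (j,l) = (\<integral>\<omega>. Y n 0 \<omega> j * Y n 0 \<omega> l \<partial>M n)" using cov[of 0 n j l] n(2) that by simp
        also have "\<dots> = (\<integral>\<omega>. Y n 0 \<omega> l * Y n 0 \<omega> j \<partial>M n)" by (simp add: mult.commute)
        also have "\<dots> = \<Sigma>0 n $$ (l,j)" using cov[of 0 n l j] n(2) that by simp
        finally show ?thesis .
      qed
      have eign: "k\<sigma> \<le> ev" if "eigenvalue (\<Sigma>0 n) ev" for ev using eig[OF that] by simp
      have low: "k\<sigma> * vnorm x \<le> vnorm (\<Sigma>0 n *\<^sub>v x)" if "x \<in> carrier_vec (p n)" for x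
        by (rule eig_low[OF Sigma0_carrier sym k_pos eign that])
      have TS: "to_mat (p n) S \<in> carrier_mat (p n) (p n)" by (simp add: to_mat_def)
      have ek: "\<epsilon> n \<le> k\<sigma> / 2" using n(1) by linarith
      have "spec_norm (mat_inv (to_mat (p n) S) - mat_inv (\<Sigma>0 n)) \<le> 2 / k\<sigma>^2 * \<epsilon> n"
        by (rule perturb[OF TS Sigma0_carrier k_pos low le ek])
      then show False using S unfolding B_def C_def by auto
    qed
  qed
  have main: "to_zero_in_prob M (\<lambda>n \<omega>. posterior (p n) n (\<mu> n) (\<lambda>i. Y n i \<omega>) (B n))"
    unfolding to_zero_in_prob_def
  proof (intro allI impI)
    fix \<delta> :: real assume \<delta>: "\<delta> > 0"
    define fA where "fA n = measure (M n) {\<omega> \<in> space (M n). \<bar>posterior (p n) n (\<mu> n) (\<lambda>i. Y n i \<omega>) (A n)\<bar> > \<delta>}" for n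
    define fB where "fB n = measure (M n) {\<omega> \<in> space (M n). \<bar>posterior (p n) n (\<mu> n) (\<lambda>i. Y n i \<omega>) (B n)\<bar> > \<delta>}" for n
    have hA: "fA \<longlonglongrightarrow> 0" using contr_Sigma \<delta> unfolding to_zero_in_prob_def A_def fA_def by blast
    have evle: "eventually (\<lambda>n. fB n \<le> fA n) sequentially"
      using ev
    proof (rule eventually_mono)
      fix n assume n: "\<epsilon> n < k\<sigma>/2 \<and> 1 \<le> n"
      interpret prob_space "M n" by (rule prob)
      have Ameas: "A n \<in> sets (param_space (p n))" unfolding A_def by (rule A_meas[OF Sigma0_carrier])
      define Z where "Z \<omega> = posterior (p n) n (\<mu> n) (\<lambda>i. Y n i \<omega>) (A n)" for \<omega>
      have Zm[measurable]: "Z \<in> borel_measurable (M n)" unfolding Z_def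
        by (rule post_meas[OF _ prior_prob prior_sets Ameas]) (rule meas)
      have setm: "{\<omega> \<in> space (M n). \<bar>Z \<omega>\<bar> > \<delta>} \<in> sets (M n)" by measurable
      have sub: "{\<omega> \<in> space (M n). \<bar>posterior (p n) n (\<mu> n) (\<lambda>i. Y n i \<omega>) (B n)\<bar> > \<delta>} \<subseteq> {\<omega> \<in> space (M n). \<bar>Z \<omega>\<bar> > \<delta>}"
      proof clarify
        fix \<omega> assume "\<omega> \<in> space (M n)" "\<delta> < \<bar>posterior (p n) n (\<mu> n) (\<lambda>i. Y n i \<omega>) (B n)\<bar>"
        moreover have "posterior (p n) n (\<mu> n) (\<lambda>i. Y n i \<omega>) (B n) \<le> Z \<omega>"
          unfolding Z_def by (rule post_mono[OF BA]) (use n in auto)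
        moreover have "0 \<le> posterior (p n) n (\<mu> n) (\<lambda>i. Y n i \<omega>) (B n)" unfolding posterior_def by simp
        ultimately show "\<delta> < \<bar>Z \<omega>\<bar>" by linarith
      qed
      show "fB n \<le> fA n" unfolding fB_def fA_def using finite_measure_mono[OF sub setm] Z_def by simp
    qed
    have h0: "eventually (\<lambda>n. 0 \<le> fB n) sequentially" by (simp add: fB_def)
    show "(\<lambda>n. measure (M n) {\<omega> \<in> space (M n). \<bar>posterior (p n) n (\<mu> n) (\<lambda>i. Y n i \<omega>) (B n)\<bar> > \<delta>}) \<longlonglongrightarrow> 0"
      using tendsto_sandwich[OF h0 evle tendsto_const hA] unfolding fB_def .
  qed
  show ?thesis using Cpos main unfolding B_def by blast
qed

end
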